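(* For every $D$-sequence $\mathbf{b}$, the topology $\tau_{\mathbf{b}}$ is strictly finer than $\lambda_{\mathbf{b}}$; in particular the identity $(\mathbb{Z},\tau_{\mathbf{b}})\to(\mathbb{Z},\lambda_{\mathbf{b}})$ is a continuous isomorphism which is not a homeomorphism.
   Context: $\mathbb{T}=\mathbb{R}/\mathbb{Z}$; $\mathbb{T}_m=[-\frac{1}{4m},\frac{1}{4m}]+\mathbb{Z}$. A $D$-sequence is a sequence $\mathbf{b}=(b_n)_{n\in\mathbb{N}_0}$ of natural numbers with $b_0=1$, $b_n\mid b_{n+1}$, $b_n\neq b_{n+1}$. $\lambda_{\mathbf{b}}$ is the group topology on $\mathbb{Z}$ with neighborhood basis $\{b_n\mathbb{Z}\}_{n\in\mathbb{N}_0}$ at $0$. $\tau_{\mathbf{b}}$ is the group topology on $\mathbb{Z}$ with neighborhood basis at $0$ given by $V_{\mathbf{b},m}=\{k\in\mathbb{Z}: \frac{k}{b_n}+\mathbb{Z}\in\mathbb{T}_m \text{ for all } n\in\mathbb{N}\}$, $m\in\mathbb{N}$. *)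

theory Defs
  imports "HOL-Analysis.Analysis"
begin

definition D_sequence :: "(nat \<Rightarrow> nat) \<Rightarrow> bool" where
  "D_sequence b \<longleftrightarrow> b 0 = 1 \<and> (\<forall>n. 0 < b n) \<and> (\<forall>n. b n dvd b (Suc n) \<and> b n \<noteq> b (Suc n))"

text \<open>T_m = [-1/(4m), 1/(4m)] + Z, as a predicate on real representatives.\<close>
definition in_Tm :: "nat \<Rightarrow> real \<Rightarrow> bool" where
  "in_Tm m x \<longleftrightarrow> (\<exists>z::int. \<bar>x - of_int z\<bar> \<le> 1 / (4 * real m))"

definition V_b :: "(nat \<Rightarrow> nat) \<Rightarrow> nat \<Rightarrow> int set" where
  "V_b b m = {k::int. \<forall>n. in_Tm m (real_of_int k / real (b n))}"

definition lambda_top :: "(nat \<Rightarrow> nat) \<Rightarrow> int topology" where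
  "lambda_top b = topology (\<lambda>U. \<forall>x\<in>U. \<exists>n. {x + int (b n) * k | k. True} \<subseteq> U)"

definition tau_top :: "(nat \<Rightarrow> nat) \<Rightarrow> int topology" where
  "tau_top b = topology (\<lambda>U. \<forall>x\<in>U. \<exists>m\<ge>1. (\<lambda>k. x + k) ` V_b b m \<subseteq> U)"

end

theory Submission
  imports Defs
begin

lemma D_dvd: assumes "D_sequence b" "n \<le> m" shows "b n dvd b m"
  using assms(2)
proof (induction m)
  case 0 then show ?case by simp
next
  case (Suc m)
  show ?case
  proof (cases "n = Suc m")
    case False
    then have "b n dvd b m" using Suc by simp
    moreover have "b m dvd b (Suc m)" using assms(1) unfolding D_sequence_def by blast
    ultimately show ?thesis by (rule dvd_trans)
  qed simp
qed

lemma lambda_istop: assumes "D_sequence b"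
  shows "istopology (\<lambda>U. \<forall>x\<in>U. \<exists>n. {x + int (b n) * k | k. True} \<subseteq> U)"
  unfolding istopology_def
proof (intro conjI allI impI)
  fix S T :: "int set"
  assume S: "\<forall>x\<in>S. \<exists>n. {x + int (b n) * k | k. True} \<subseteq> S"
     and T: "\<forall>x\<in>T. \<exists>n. {x + int (b n) * k | k. True} \<subseteq> T"
  show "\<forall>x\<in>S \<inter> T. \<exists>n. {x + int (b n) * k | k. True} \<subseteq> S \<inter> T"
  proof
    fix x assume x: "x \<in> S \<inter> T"
    obtain n1 where n1: "{x + int (b n1) * k | k. True} \<subseteq> S" using S x by blast
    obtain n2 where n2: "{x + int (b n2) * k | k. True} \<subseteq> T" using T x by blast
    let ?n = "max n1 n2"
    have "b n1 dvd b ?n" by (rule D_dvd[OF assms]) simp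
    then obtain c1 where c1: "b ?n = b n1 * c1" by (rule dvdE)
    have "b n2 dvd b ?n" by (rule D_dvd[OF assms]) simp
    then obtain c2 where c2: "b ?n = b n2 * c2" by (rule dvdE)
    have "{x + int (b ?n) * k | k. True} \<subseteq> S \<inter> T"
    proof
      fix y assume "y \<in> {x + int (b ?n) * k | k. True}"
      then obtain k where k: "y = x + int (b ?n) * k" by blast
      have "y = x + int (b n1) * (int c1 * k)" unfolding k c1 by (simp add: mult.assoc)
      then have "y \<in> S" using n1 by blast
      moreover have "y = x + int (b n2) * (int c2 * k)" unfolding k c2 by (simp add: mult.assoc)
      then have "y \<in> T" using n2 by blast
      ultimately show "y \<in> S \<inter> T" by blast
    qed
    then show "\<exists>n. {x + int (b n) * k | k. True} \<subseteq> S \<inter> T" by blast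
  qed
next
  fix K :: "int set set"
  assume "\<forall>U\<in>K. \<forall>x\<in>U. \<exists>n. {x + int (b n) * k | k. True} \<subseteq> U"
  then show "\<forall>x\<in>\<Union>K. \<exists>n. {x + int (b n) * k | k. True} \<subseteq> \<Union>K"
    by (meson Union_upper subset_trans UnionE)
qed

lemma in_Tm_mono: assumes "1 \<le> m" "m \<le> m'" "in_Tm m' x" shows "in_Tm m x"
proof -
  obtain z::int where z: "\<bar>x - of_int z\<bar> \<le> 1 / (4 * real m')" using assms(3) in_Tm_def by blast
  have "1 / (4 * real m') \<le> 1 / (4 * real m)" using assms(1,2)
    by (simp add: frac_le)
  then have "\<bar>x - of_int z\<bar> \<le> 1 / (4 * real m)" using z by linarith
  then show ?thesis unfolding in_Tm_def by blast
qed

lemma V_mono: assumes "1 \<le> m" "m \<le> m'" shows "V_b b m' \<subseteq> V_b b m"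
  using in_Tm_mono[OF assms] unfolding V_b_def by blast

lemma zero_V: "0 \<in> V_b b m"
  unfolding V_b_def in_Tm_def by (auto intro: exI[of _ 0])

lemma in_Tm_add: assumes "1 \<le> m" "in_Tm (2*m) x" "in_Tm (2*m) y" shows "in_Tm m (x+y)"
proof -
  obtain z1::int where z1: "\<bar>x - of_int z1\<bar> \<le> 1 / (4 * real (2*m))" using assms(2) in_Tm_def by blast
  obtain z2::int where z2: "\<bar>y - of_int z2\<bar> \<le> 1 / (4 * real (2*m))" using assms(3) in_Tm_def by blast
  have e: "1 / (4 * real (2*m)) + 1 / (4 * real (2*m)) = 1 / (4 * real m)" using assms(1)
    by (simp add: field_simps)
  have "\<bar>(x+y) - of_int (z1+z2)\<bar> \<le> 1 / (4 * real m)"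
    using z1 z2 e by (simp add: abs_le_iff)
  then show ?thesis unfolding in_Tm_def by blast
qed

lemma V_add: assumes "1 \<le> m" "k \<in> V_b b (2*m)" "l \<in> V_b b (2*m)" shows "k + l \<in> V_b b m"
  using assms in_Tm_add[OF assms(1)] unfolding V_b_def by (auto simp: add_divide_distrib)

lemma tau_istop:
  shows "istopology (\<lambda>U. \<forall>x\<in>U. \<exists>m\<ge>1. (\<lambda>k. x + k) ` V_b b m \<subseteq> U)"
  unfolding istopology_def
proof (intro conjI allI impI)
  fix S T :: "int set"
  assume S: "\<forall>x\<in>S. \<exists>m\<ge>1. (\<lambda>k. x + k) ` V_b b m \<subseteq> S"
     and T: "\<forall>x\<in>T. \<exists>m\<ge>1. (\<lambda>k. x + k) ` V_b b m \<subseteq> T"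
  show "\<forall>x\<in>S \<inter> T. \<exists>m\<ge>1. (\<lambda>k. x + k) ` V_b b m \<subseteq> S \<inter> T"
  proof
    fix x assume x: "x \<in> S \<inter> T"
    obtain m1 where m1: "m1 \<ge> 1" "(\<lambda>k. x + k) ` V_b b m1 \<subseteq> S" using S x by blast
    obtain m2 where m2: "m2 \<ge> 1" "(\<lambda>k. x + k) ` V_b b m2 \<subseteq> T" using T x by blast
    have "V_b b (max m1 m2) \<subseteq> V_b b m1" "V_b b (max m1 m2) \<subseteq> V_b b m2"
      using V_mono m1 m2 by auto
    then have "(\<lambda>k. x + k) ` V_b b (max m1 m2) \<subseteq> S \<inter> T" using m1 m2 by blast
    then show "\<exists>m\<ge>1. (\<lambda>k. x + k) ` V_b b m \<subseteq> S \<inter> T" using m1 by (intro exI[of _ "max m1 m2"]) auto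
  qed
next
  fix K :: "int set set"
  assume "\<forall>U\<in>K. \<forall>x\<in>U. \<exists>m\<ge>1. (\<lambda>k. x + k) ` V_b b m \<subseteq> U"
  then show "\<forall>x\<in>\<Union>K. \<exists>m\<ge>1. (\<lambda>k. x + k) ` V_b b m \<subseteq> \<Union>K"
    by (meson Union_upper subset_trans UnionE)
qed

lemma openin_lambda: assumes "D_sequence b"
  shows "openin (lambda_top b) U \<longleftrightarrow> (\<forall>x\<in>U. \<exists>n. {x + int (b n) * k | k. True} \<subseteq> U)"
  unfolding lambda_top_def using lambda_istop[OF assms] by simp

lemma openin_tau:
  shows "openin (tau_top b) U \<longleftrightarrow> (\<forall>x\<in>U. \<exists>m\<ge>1. (\<lambda>k. x + k) ` V_b b m \<subseteq> U)"
  unfolding tau_top_def using tau_istop by simp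

lemma V_sub_mult: assumes "D_sequence b" "k \<in> V_b b (b N)" shows "int (b N) dvd k"
proof -
  have pos: "b N > 0" using assms(1) unfolding D_sequence_def by blast
  have "in_Tm (b N) (real_of_int k / real (b N))" using assms(2) unfolding V_b_def by blast
  then obtain z::int where z: "\<bar>real_of_int k / real (b N) - of_int z\<bar> \<le> 1 / (4 * real (b N))"
    unfolding in_Tm_def by blast
  have "real_of_int k / real (b N) - of_int z = real_of_int (k - z * int (b N)) / real (b N)"
    using pos by (simp add: field_simps)
  then have "\<bar>real_of_int (k - z * int (b N))\<bar> / real (b N) \<le> 1 / (4 * real (b N))"
    using z by simp
  then have "\<bar>real_of_int (k - z * int (b N))\<bar> \<le> 1/4" using pos
    by (simp add: field_simps)
  then have "\<bar>k - z * int (b N)\<bar> < 1" by linarith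
  then have "k = z * int (b N)" by linarith
  then show ?thesis by simp
qed

lemma lambda_imp_tau: assumes "D_sequence b" "openin (lambda_top b) U"
  shows "openin (tau_top b) U"
  unfolding openin_tau
proof
  fix x assume x: "x \<in> U"
  obtain n where n: "{x + int (b n) * k | k. True} \<subseteq> U" using assms x openin_lambda by blast
  have "b n > 0" using assms(1) unfolding D_sequence_def by blast
  then have "b n \<ge> 1" by simp
  moreover have "(\<lambda>k. x + k) ` V_b b (b n) \<subseteq> U"
  proof
    fix y assume "y \<in> (\<lambda>k. x + k) ` V_b b (b n)"
    then obtain k where k: "k \<in> V_b b (b n)" "y = x + k" by blast
    obtain c where "k = int (b n) * c" using V_sub_mult[OF assms(1) k(1)] by (auto elim: dvdE)
    then show "y \<in> U" using n k by blast
  qed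
  ultimately show "\<exists>m\<ge>1. (\<lambda>k. x + k) ` V_b b m \<subseteq> U" by blast
qed

definition Int1 :: "(nat \<Rightarrow> nat) \<Rightarrow> int set" where
  "Int1 b = {x. \<exists>m\<ge>1. (\<lambda>k. x + k) ` V_b b m \<subseteq> V_b b 1}"

lemma Int1_open: "openin (tau_top b) (Int1 b)"
  unfolding openin_tau
proof
  fix x assume "x \<in> Int1 b"
  then obtain m where m: "m \<ge> 1" "(\<lambda>k. x + k) ` V_b b m \<subseteq> V_b b 1" unfolding Int1_def by blast
  have "(\<lambda>k. x + k) ` V_b b (2*m) \<subseteq> Int1 b"
  proof
    fix y assume "y \<in> (\<lambda>k. x + k) ` V_b b (2*m)"
    then obtain k where k: "k \<in> V_b b (2*m)" "y = x + k" by blast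
    have "(\<lambda>l. y + l) ` V_b b (2*m) \<subseteq> V_b b 1"
    proof
      fix w assume "w \<in> (\<lambda>l. y + l) ` V_b b (2*m)"
      then obtain l where l: "l \<in> V_b b (2*m)" "w = y + l" by blast
      have "k + l \<in> V_b b m" using V_add[OF m(1) k(1) l(1)] .
      then have "x + (k + l) \<in> V_b b 1" using m(2) by blast
      then show "w \<in> V_b b 1" using k l by (simp add: add.assoc)
    qed
    then show "y \<in> Int1 b" unfolding Int1_def using m(1) by (intro CollectI exI[of _ "2*m"]) auto
  qed
  then show "\<exists>m\<ge>1. (\<lambda>k. x + k) ` V_b b m \<subseteq> Int1 b" using m(1) by (intro exI[of _ "2*m"]) auto
qed

lemma zero_Int1: "0 \<in> Int1 b"
  unfolding Int1_def by (auto intro!: exI[of _ 1])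

lemma Int1_sub: "Int1 b \<subseteq> V_b b 1"
  unfolding Int1_def using zero_V by fastforce

lemma far: fixes q j z :: int assumes "q \<ge> 2" "j = q div 2"
  shows "4 * \<bar>j - z * q\<bar> > q"
proof -
  have h: "q = 2*j + q mod 2" "0 \<le> q mod 2" "q mod 2 < 2" using assms by simp_all
  show ?thesis
proof (cases "z \<le> 0")
  case True
  have "z * q \<le> 0" using True assms(1) by (simp add: mult_nonpos_nonneg)
  moreover have "4 * j > q" using assms h by presburger
  ultimately have "4 * (j - z * q) > q" "j - z * q \<ge> 0" using assms by (simp_all add: algebra_simps)
  then show ?thesis by simp
next
  case False
  have "z * q \<ge> q" using False assms(1) by simp
  moreover have "4 * j < 3 * q" using assms h by linarith
  ultimately have A: "4 * (z * q) - 4 * j > q" "z * q - j \<ge> 0" using assms(1) by linarith+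
  then have "4 * (z * q - j) > q" "z * q - j \<ge> 0" by (simp_all add: right_diff_distrib)
  then show ?thesis by (simp add: abs_minus_commute)
qed
qed

lemma not_in_V1: assumes "D_sequence b"
  shows "\<exists>j. int (b N) * j \<notin> V_b b 1"
proof -
  have pos: "\<And>n. b n > 0" using assms unfolding D_sequence_def by blast
  obtain q where q: "b (Suc N) = b N * q" using assms unfolding D_sequence_def by (meson dvdE)
  have "q \<noteq> 0" using q pos[of "Suc N"] by auto
  moreover have "q \<noteq> 1" using q assms unfolding D_sequence_def by (metis mult.right_neutral)
  ultimately have q2: "int q \<ge> 2" by linarith
  define j where "j = int q div 2"
  have "\<not> in_Tm 1 (real_of_int (int (b N) * j) / real (b (Suc N)))"
  proof
    assume "in_Tm 1 (real_of_int (int (b N) * j) / real (b (Suc N)))"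
    then obtain z::int where z: "\<bar>real_of_int (int (b N) * j) / real (b (Suc N)) - of_int z\<bar> \<le> 1/4"
      unfolding in_Tm_def by auto
    have "real_of_int (int (b N) * j) / real (b (Suc N)) - of_int z = real_of_int (j - z * int q) / real q"
      using q pos[of N] q2 by (simp add: field_simps)
    then have "\<bar>real_of_int (j - z * int q)\<bar> / real q \<le> 1/4" using z by simp
    then have "4 * \<bar>real_of_int (j - z * int q)\<bar> \<le> real q" using q2 by (simp add: field_simps)
    then have "4 * \<bar>j - z * int q\<bar> \<le> int q" by linarith
    with far[OF q2 j_def, of z] show False by simp
  qed
  then show ?thesis unfolding V_b_def by blast
qed

theorem proposition3p7:
  fixes b :: "nat \<Rightarrow> nat"
  assumes "D_sequence b"
  shows "(\<forall>U. openin (lambda_top b) U \<longrightarrow> openin (tau_top b) U)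
         \<and> tau_top b \<noteq> lambda_top b
         \<and> continuous_map (tau_top b) (lambda_top b) id
         \<and> \<not> homeomorphic_map (tau_top b) (lambda_top b) id"
proof -
  have A: "\<forall>U. openin (lambda_top b) U \<longrightarrow> openin (tau_top b) U"
    using lambda_imp_tau[OF assms] by blast
  have notl: "\<not> openin (lambda_top b) (Int1 b)"
  proof
    assume "openin (lambda_top b) (Int1 b)"
    then obtain n where n: "{0 + int (b n) * k | k. True} \<subseteq> Int1 b"
      using openin_lambda[OF assms] zero_Int1 by blast
    obtain j where "int (b n) * j \<notin> V_b b 1" using not_in_V1[OF assms] by blast
    then show False using n Int1_sub by auto
  qed
  have B: "tau_top b \<noteq> lambda_top b" using notl Int1_open by metis
  have tsl: "topspace (lambda_top b) = UNIV"
    using openin_subset[of "lambda_top b" UNIV] openin_lambda[OF assms, of UNIV] by auto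
  have tst: "topspace (tau_top b) = UNIV"
    using openin_subset[of "tau_top b" UNIV] openin_tau[of b UNIV] zero_V by auto
  have C: "continuous_map (tau_top b) (lambda_top b) id"
    unfolding continuous_map tsl tst using A by simp
  show ?thesis using A B C by simp
qed

end
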